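(* Let $A \in \mathbb{R}^{n\times d}$, $b \in \mathbb{R}^n$. Let $w$ be a random variable in $\mathbb{R}^n$ and let $\mathcal{N}(w) = \mathrm{span}\lbrace z \in \mathbb{R}^d : \mathbb{P}[z'A'w = 0]=1\rbrace$, $\mathcal{R}(w) = \mathcal{N}(w)^\perp$. Let $w_0, w_1, \ldots$ be random variables in $\mathbb{R}^n$ (on the same probability space) with $\mathbb{P}[A'w_l \in \mathcal{R}(w)] = 1$ for all $l \geq 0$, and let $T = \min\lbrace k \geq 0 : \mathrm{span}\lbrace A'w_0,\ldots,A'w_k\rbrace \supset \mathcal{R}(w)\rbrace$. Let $x_0 \in \mathbb{R}^d$ be arbitrary, $S_0 = I_d$, and for $l \geq 0$ $$x_{l+1} = \begin{cases} x_l + \dfrac{S_l A' w_l w_l'(b - A x_l)}{w_l' A S_l A' w_l} & S_l A'w_l \neq 0,\\ x_l & \text{otherwise,}\end{cases}\qquad S_{l+1} = \begin{cases} S_l - \dfrac{S_l A' w_l w_l' A S_l}{w_l' A S_l A' w_l} & S_l A' w_l \neq 0,\\ S_l & \text{otherwise.}\end{cases}$$ Then, almost surely on the event $\lbrace T < \infty\rbrace$: (1) for every $s \geq T+1$, $S_{T+1} = S_s$ and $x_{T+1} = x_s$; (2) if $Ax = b$ admits a solution $x^*$ (not necessarily unique), then $x_{T+1} = P_{\mathcal{N}(w)} x_0 + P_{\mathcal{R}(w)} x^*$.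
   Context: $P_W$ denotes the orthogonal projection matrix onto a subspace $W \subset \mathbb{R}^d$; $A'$ is the transpose of $A$. *)

theory Defs
  imports "HOL-Probability.Probability"
begin

definition orth_proj :: "('a::euclidean_space) set \<Rightarrow> 'a \<Rightarrow> 'a" where
  "orth_proj W x = (THE y. y \<in> W \<and> (\<forall>z\<in>W. orthogonal (x - y) z))"

definition orth_comp :: "('a::real_inner) set \<Rightarrow> 'a set" where
  "orth_comp W = {y. \<forall>z\<in>W. orthogonal y z}"

definition nullsp :: "'a measure \<Rightarrow> real^'d^'n \<Rightarrow> ('a \<Rightarrow> real^'n) \<Rightarrow> (real^'d) set" where
  "nullsp M A w = span {z. measure M {\<omega> \<in> space M. z \<bullet> (transpose A *v w \<omega>) = 0} = 1}"

definition rowsp :: "'a measure \<Rightarrow> real^'d^'n \<Rightarrow> ('a \<Rightarrow> real^'n) \<Rightarrow> (real^'d) set" where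
  "rowsp M A w = orth_comp (nullsp M A w)"

definition covers :: "'a measure \<Rightarrow> real^'d^'n \<Rightarrow> ('a \<Rightarrow> real^'n) \<Rightarrow> (nat \<Rightarrow> 'a \<Rightarrow> real^'n) \<Rightarrow> 'a \<Rightarrow> nat \<Rightarrow> bool" where
  "covers M A w ws \<omega> k \<longleftrightarrow> rowsp M A w \<subseteq> span ((\<lambda>i. transpose A *v ws i \<omega>) ` {..k})"

text \<open>Stopping time T (meaningful on the event that some k satisfies covers).\<close>
definition stopT :: "'a measure \<Rightarrow> real^'d^'n \<Rightarrow> ('a \<Rightarrow> real^'n) \<Rightarrow> (nat \<Rightarrow> 'a \<Rightarrow> real^'n) \<Rightarrow> 'a \<Rightarrow> nat" where
  "stopT M A w ws \<omega> = (LEAST k. covers M A w ws \<omega> k)"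

definition outer :: "real^'d \<Rightarrow> real^'d \<Rightarrow> real^'d^'d" where
  "outer u v = (\<chi> i j. u $ i * v $ j)"

fun iter :: "real^'d^'n \<Rightarrow> real^'n \<Rightarrow> real^'d \<Rightarrow> (nat \<Rightarrow> real^'n) \<Rightarrow> nat \<Rightarrow> (real^'d) \<times> (real^'d^'d)" where
  "iter A b x0 ws 0 = (x0, mat 1)"
| "iter A b x0 ws (Suc l) =
     (let (x, S) = iter A b x0 ws l;
          v = transpose A *v ws l;
          u = S *v v;
          den = ws l \<bullet> (A *v u)
      in if u \<noteq> 0
         then (x + ((ws l \<bullet> (b - A *v x)) / den) *\<^sub>R u,
               S - (1 / den) *\<^sub>R outer u (v v* S))
         else (x, S))"

end

theory Submission
  imports Defs
begin

definition projP :: "real^'d^'d \<Rightarrow> (real^'d) set \<Rightarrow> bool" where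
  "projP S V \<longleftrightarrow> (\<forall>y. S *v y \<in> orth_comp V \<and> y - S *v y \<in> V)"

lemma orth_comp_subspace: "subspace (orth_comp X)"
proof -
  have "orth_comp X = {y. \<forall>x \<in> X. orthogonal x y}"
    unfolding orth_comp_def by (auto simp: orthogonal_commute)
  then show ?thesis using subspace_orthogonal_to_vectors by metis
qed

lemma orth_comp_self: "x \<in> X \<Longrightarrow> x \<in> orth_comp X \<Longrightarrow> x = 0"
  unfolding orth_comp_def orthogonal_def by auto

lemma projP_orth: "projP S V \<Longrightarrow> (u - S *v u) \<bullet> (S *v y) = 0"
proof -
  assume P: "projP S V"
  have "u - S *v u \<in> V" "S *v y \<in> orth_comp V" using P unfolding projP_def by blast+
  then have "orthogonal (S *v y) (u - S *v u)" unfolding orth_comp_def by blast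
  then show ?thesis by (simp add: orthogonal_def inner_commute)
qed

lemma projP_sym: "projP S V \<Longrightarrow> u \<bullet> (S *v y) = (S *v u) \<bullet> y"
proof -
  assume P: "projP S V"
  have a: "(u - S *v u) \<bullet> (S *v y) = 0" using projP_orth[OF P] .
  have b: "(y - S *v y) \<bullet> (S *v u) = 0" using projP_orth[OF P] .
  from a b show ?thesis by (simp add: inner_diff_left inner_diff_right inner_commute)
qed

lemma projP_zero: "projP S V \<Longrightarrow> subspace V \<Longrightarrow> z \<in> V \<Longrightarrow> S *v z = 0"
proof -
  assume P: "projP S V" and s: "subspace V" and z: "z \<in> V"
  have "z - S *v z \<in> V" using P unfolding projP_def by blast
  then have "z - (z - S *v z) \<in> V" using subspace_diff[OF s z] by blast
  then have "S *v z \<in> V" by simp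
  then show ?thesis using P orth_comp_self unfolding projP_def by blast
qed

lemma projP_id: "projP S V \<Longrightarrow> subspace V \<Longrightarrow> z \<in> orth_comp V \<Longrightarrow> S *v z = z"
proof -
  assume P: "projP S V" and s: "subspace V" and z: "z \<in> orth_comp V"
  have "S *v z \<in> orth_comp V" using P unfolding projP_def by blast
  then have "z - S *v z \<in> orth_comp V" using subspace_diff[OF orth_comp_subspace z] by blast
  then have "z - S *v z = 0" using P orth_comp_self unfolding projP_def by blast
  then show ?thesis by simp
qed

lemma outer_mult: "outer u p *v y = (p \<bullet> y) *\<^sub>R u"
  by (simp add: vec_eq_iff outer_def matrix_vector_mult_def inner_vec_def sum_distrib_left ac_simps)

lemma in_orth_comp_span: "(\<And>z. z \<in> X \<Longrightarrow> y \<bullet> z = 0) \<Longrightarrow> y \<in> orth_comp (span X)"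
proof -
  assume h: "\<And>z. z \<in> X \<Longrightarrow> y \<bullet> z = 0"
  have "orthogonal y x" if "x \<in> span X" for x
    using orthogonal_to_span[OF that, of y] h unfolding orthogonal_def by (simp add: inner_commute)
  then show ?thesis unfolding orth_comp_def by blast
qed

lemma projP_step:
  assumes P: "projP S (span X)" and u: "u = S *v v" "u \<noteq> 0" and d: "d = v \<bullet> u"
  shows "projP (S - (1/d) *\<^sub>R outer u (v v* S)) (span (insert v X))"
    and "d > 0"
    and "\<And>y. (S - (1/d) *\<^sub>R outer u (v v* S)) *v y = S *v y - ((u \<bullet> y) / d) *\<^sub>R u"
proof -
  have sym: "\<And>a c. a \<bullet> (S *v c) = (S *v a) \<bullet> c" using projP_sym[OF P] .
  have dd: "d = u \<bullet> u" using projP_orth[OF P, of v v] d u by (simp add: inner_diff_left)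
  then show "d > 0" using u by simp
  have eq: "(S - (1/d) *\<^sub>R outer u (v v* S)) *v y = S *v y - ((u \<bullet> y) / d) *\<^sub>R u" for y
  proof -
    have "(v v* S) \<bullet> y = u \<bullet> y" using dot_lmul_matrix sym u by metis
    then show ?thesis
      by (simp add: matrix_vector_mult_diff_rdistrib outer_mult scaleR_matrix_vector_assoc[symmetric])
  qed
  then show "\<And>y. (S - (1/d) *\<^sub>R outer u (v v* S)) *v y = S *v y - ((u \<bullet> y) / d) *\<^sub>R u" .
  show "projP (S - (1/d) *\<^sub>R outer u (v v* S)) (span (insert v X))"
    unfolding projP_def
  proof (intro allI conjI)
    fix y
    have Sy: "S *v y \<in> orth_comp (span X)" and Sv: "u \<in> orth_comp (span X)"
      using P u unfolding projP_def by auto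
    show "(S - (1/d) *\<^sub>R outer u (v v* S)) *v y \<in> orth_comp (span (insert v X))"
      unfolding eq
    proof (rule in_orth_comp_span)
      fix z assume "z \<in> insert v X"
      then show "(S *v y - ((u \<bullet> y) / d) *\<^sub>R u) \<bullet> z = 0"
      proof
        assume "z = v"
        have "(S *v y - ((u \<bullet> y) / d) *\<^sub>R u) \<bullet> v = (S *v y) \<bullet> v - ((u \<bullet> y) / d) * (u \<bullet> v)"
          by (simp add: inner_diff_left)
        also have "(S *v y) \<bullet> v = u \<bullet> y" using sym[of v y] u by (simp add: inner_commute)
        also have "u \<bullet> v = d" using d by (simp add: inner_commute)
        finally show ?thesis using \<open>z = v\<close> \<open>d > 0\<close> by simp
      next
        assume "z \<in> X"
        then have "z \<in> span X" by (simp add: span_base)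
        then have "z \<bullet> (S *v y) = 0" "z \<bullet> u = 0" using Sy Sv unfolding orth_comp_def orthogonal_def
          by (auto simp: inner_commute)
        then show ?thesis by (simp add: inner_diff_left inner_diff_right inner_commute)
      qed
    qed
    have h1: "y - S *v y \<in> span (insert v X)" using P unfolding projP_def
      by (meson span_mono subsetD subset_insertI)
    have h2: "u \<in> span (insert v X)"
    proof -
      have "v - u \<in> span (insert v X)" using P u unfolding projP_def
        by (meson span_mono subsetD subset_insertI)
      moreover have "v \<in> span (insert v X)" by (simp add: span_base)
      ultimately have "v - (v - u) \<in> span (insert v X)" by (metis span_diff)
      then show ?thesis by simp
    qed
    show "y - (S - (1/d) *\<^sub>R outer u (v v* S)) *v y \<in> span (insert v X)"
    proof -
      have "y - (S *v y - ((u \<bullet> y) / d) *\<^sub>R u) = (y - S *v y) + ((u \<bullet> y) / d) *\<^sub>R u"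
        by (simp add: algebra_simps)
      also have "\<dots> \<in> span (insert v X)" using h1 h2 by (intro span_add span_scale)
      finally show ?thesis unfolding eq .
    qed
  qed
qed

lemma iter_Suc_eq:
  assumes "iter A b x0 ws l = (x, S)"
  shows "iter A b x0 ws (Suc l) =
    (let v = transpose A *v ws l; u = S *v v; d = v \<bullet> u in
     if u \<noteq> 0 then (x + ((ws l \<bullet> (b - A *v x)) / d) *\<^sub>R u, S - (1 / d) *\<^sub>R outer u (v v* S))
     else (x, S))"
  using assms by (simp add: Let_def dot_lmul_matrix)

lemma iter_S:
  "projP (snd (iter A b x0 ws l)) (span ((\<lambda>i. transpose A *v ws i) ` {..<l}))"
proof (induction l)
  case 0
  show ?case by (simp add: projP_def orth_comp_def orthogonal_def)
next
  case (Suc l)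
  obtain x S where xs: "iter A b x0 ws l = (x, S)" by (metis prod.exhaust)
  define v where "v = transpose A *v ws l"
  define X where "X = (\<lambda>i. transpose A *v ws i) ` {..<l}"
  have P: "projP S (span X)" using Suc xs X_def by simp
  have ins: "(\<lambda>i. transpose A *v ws i) ` {..<Suc l} = insert v X"
    by (auto simp: X_def v_def lessThan_Suc)
  show ?case
  proof (cases "S *v v = 0")
    case True
    then have "iter A b x0 ws (Suc l) = (x, S)" using iter_Suc_eq[OF xs] v_def by (simp add: Let_def)
    moreover have "v \<in> span X"
    proof -
      have "v - S *v v \<in> span X" using P unfolding projP_def by blast
      then show ?thesis using True by simp
    qed
    ultimately show ?thesis using P ins span_redundant by (metis snd_conv)
  next
    case False
    then have "iter A b x0 ws (Suc l) = (x + ((ws l \<bullet> (b - A *v x)) / (v \<bullet> (S *v v))) *\<^sub>R (S *v v),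
        S - (1 / (v \<bullet> (S *v v))) *\<^sub>R outer (S *v v) (v v* S))"
      using iter_Suc_eq[OF xs] v_def by (simp add: Let_def)
    then show ?thesis using projP_step(1)[OF P refl False refl] ins by simp
  qed
qed

lemma iter_x:
  assumes sol: "A *v xs = b"
  shows "fst (iter A b x0 ws l) = xs + snd (iter A b x0 ws l) *v (x0 - xs)"
proof (induction l)
  case 0
  show ?case by simp
next
  case (Suc l)
  obtain x S where xS: "iter A b x0 ws l = (x, S)" by (metis prod.exhaust)
  define v where "v = transpose A *v ws l"
  have P: "projP S (span ((\<lambda>i. transpose A *v ws i) ` {..<l}))" using iter_S[of A b x0 ws l] xS by simp
  have IH: "x = xs + S *v (x0 - xs)" using Suc xS by simp
  show ?case
  proof (cases "S *v v = 0")
    case True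
    then have "iter A b x0 ws (Suc l) = (x, S)" using iter_Suc_eq[OF xS] v_def by (simp add: Let_def)
    then show ?thesis using IH by simp
  next
    case False
    define u where "u = S *v v"
    define d where "d = v \<bullet> u"
    have it: "iter A b x0 ws (Suc l) = (x + ((ws l \<bullet> (b - A *v x)) / d) *\<^sub>R u,
        S - (1 / d) *\<^sub>R outer u (v v* S))"
      using iter_Suc_eq[OF xS] v_def False u_def d_def by (simp add: Let_def)
    have st: "(S - (1/d) *\<^sub>R outer u (v v* S)) *v y = S *v y - ((u \<bullet> y) / d) *\<^sub>R u" for y
      using projP_step(3)[OF P u_def False[folded u_def] d_def] .
    have "ws l \<bullet> (b - A *v x) = ws l \<bullet> (A *v (xs - x))" using sol by (simp add: matrix_vector_mult_diff_distrib)
    also have "\<dots> = v \<bullet> (xs - x)" using dot_lmul_matrix v_def by (metis transpose_matrix_vector)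
    also have "\<dots> = - (v \<bullet> (S *v (x0 - xs)))" using IH by (simp add: inner_minus_right)
    also have "\<dots> = - (u \<bullet> (x0 - xs))" using projP_sym[OF P] u_def by simp
    finally have e: "ws l \<bullet> (b - A *v x) = - (u \<bullet> (x0 - xs))" .
    have "fst (iter A b x0 ws (Suc l)) = x + ((ws l \<bullet> (b - A *v x)) / d) *\<^sub>R u"
      unfolding it by simp
    also have "\<dots> = xs + S *v (x0 - xs) - ((u \<bullet> (x0 - xs)) / d) *\<^sub>R u"
      unfolding e divide_minus_left scaleR_minus_left by (subst IH) simp
    also have "\<dots> = xs + snd (iter A b x0 ws (Suc l)) *v (x0 - xs)"
      by (simp only: it snd_conv st) simp
    finally show ?thesis .
  qed
qed

lemma iter_stable:
  assumes "m \<le> s" and "\<And>j. j \<ge> m \<Longrightarrow> transpose A *v ws j \<in> span ((\<lambda>i. transpose A *v ws i) ` {..<m})"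
  shows "iter A b x0 ws s = iter A b x0 ws m"
  using assms(1)
proof (induction s rule: dec_induct)
  case base
  then show ?case by simp
next
  case (step s)
  obtain x S where xS: "iter A b x0 ws m = (x, S)" by (metis prod.exhaust)
  have P: "projP S (span ((\<lambda>i. transpose A *v ws i) ` {..<m}))" using iter_S[of A b x0 ws m] xS by simp
  have "S *v (transpose A *v ws s) = 0"
    using projP_zero[OF P subspace_span assms(2)] step by simp
  then have "iter A b x0 ws (Suc s) = iter A b x0 ws s"
    using iter_Suc_eq[of A b x0 ws s x S] step xS by (simp add: Let_def)
  then show ?case using step by simp
qed

lemma orth_proj_unique:
  assumes W: "subspace W" and p: "p \<in> W" and o: "\<And>z. z \<in> W \<Longrightarrow> orthogonal (y - p) z"
  shows "orth_proj W y = p"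
  unfolding orth_proj_def
proof (rule the_equality)
  show "p \<in> W \<and> (\<forall>z\<in>W. orthogonal (y - p) z)" using p o by blast
next
  fix q assume q: "q \<in> W \<and> (\<forall>z\<in>W. orthogonal (y - q) z)"
  have pq: "p - q \<in> W" using W p q by (simp add: subspace_diff)
  have "orthogonal (y - q) (p - q)" "orthogonal (y - p) (p - q)" using q o pq by auto
  then have "(y - q) \<bullet> (p - q) - (y - p) \<bullet> (p - q) = 0" by (simp add: orthogonal_def)
  moreover have "(y - q) \<bullet> (p - q) - (y - p) \<bullet> (p - q) = (p - q) \<bullet> (p - q)"
    by (simp add: inner_diff_left)
  ultimately have "(p - q) \<bullet> (p - q) = 0" by simp
  then show "q = p" by simp
qed

lemma proj_eq:
  assumes P: "projP S (orth_comp (span X))"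
  shows "orth_proj (span X) y = S *v y" "orth_proj (orth_comp (span X)) y = y - S *v y"
proof -
  obtain a c where a: "a \<in> span X" and c: "\<And>w. w \<in> span X \<Longrightarrow> orthogonal c w" and y: "y = a + c"
    using orthogonal_subspace_decomp_exists by blast
  have cR: "c \<in> orth_comp (span X)" using c unfolding orth_comp_def by blast
  have aR: "a \<in> orth_comp (orth_comp (span X))"
    using a unfolding orth_comp_def by (auto simp: orthogonal_commute)
  have Sc: "S *v c = 0" using projP_zero[OF P orth_comp_subspace cR] .
  have Sa: "S *v a = a" using projP_id[OF P orth_comp_subspace aR] .
  have Sy: "S *v y = a" using Sc Sa y by (simp add: matrix_vector_right_distrib)
  show "orth_proj (span X) y = S *v y" unfolding Sy
    by (rule orth_proj_unique[OF subspace_span a]) (use y c in auto)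
  show "orth_proj (orth_comp (span X)) y = y - S *v y" unfolding Sy
  proof (rule orth_proj_unique[OF orth_comp_subspace])
    show "y - a \<in> orth_comp (span X)" using y cR by simp
    fix z assume "z \<in> orth_comp (span X)"
    then show "orthogonal (y - (y - a)) z" using a unfolding orth_comp_def by (auto simp: orthogonal_commute)
  qed
qed


theorem mainTheorem5:
  fixes M :: "'a measure"
    and A :: "real^'d^'n" and b :: "real^'n"
    and w :: "'a \<Rightarrow> real^'n"
    and ws :: "nat \<Rightarrow> 'a \<Rightarrow> real^'n"
    and x0 :: "real^'d"
  assumes "prob_space M"
    and "w \<in> borel_measurable M"
    and "\<And>l. ws l \<in> borel_measurable M"
    and "\<And>l. measure M {\<omega> \<in> space M. transpose A *v ws l \<omega> \<in> rowsp M A w} = 1"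
  shows "AE \<omega> in M. (\<exists>k. covers M A w ws \<omega> k) \<longrightarrow>
           ((\<forall>s \<ge> stopT M A w ws \<omega> + 1.
               iter A b x0 (\<lambda>l. ws l \<omega>) (stopT M A w ws \<omega> + 1) = iter A b x0 (\<lambda>l. ws l \<omega>) s) \<and>
            (\<forall>xs. A *v xs = b \<longrightarrow>
               fst (iter A b x0 (\<lambda>l. ws l \<omega>) (stopT M A w ws \<omega> + 1))
                 = orth_proj (nullsp M A w) x0 + orth_proj (rowsp M A w) xs))"
proof -
  interpret prob_space M by (rule assms(1))
  let ?R = "rowsp M A w"
  have "AE \<omega> in M. transpose A *v ws l \<omega> \<in> ?R" for l
  proof -
    have "AE \<omega> in M. \<omega> \<in> {\<omega> \<in> space M. transpose A *v ws l \<omega> \<in> ?R}"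
      by (rule AE_prob_1) (use assms(4) in simp)
    then show ?thesis by eventually_elim auto
  qed
  then have "AE \<omega> in M. \<forall>l. transpose A *v ws l \<omega> \<in> ?R" by (simp add: AE_all_countable)
  then show ?thesis
  proof eventually_elim
    case (elim \<omega>)
    show ?case
    proof
      assume ex: "\<exists>k. covers M A w ws \<omega> k"
      define T where "T = stopT M A w ws \<omega>"
      have cov: "covers M A w ws \<omega> T" unfolding T_def stopT_def using ex by (rule LeastI_ex)
      define V where "V = span ((\<lambda>i. transpose A *v ws i \<omega>) ` {..<T+1})"
      have sR: "subspace ?R" unfolding rowsp_def by (rule orth_comp_subspace)
      have "?R \<subseteq> V" using cov unfolding covers_def V_def by (simp add: lessThan_Suc_atMost)
      moreover have "V \<subseteq> ?R" unfolding V_def using elim by (intro span_minimal sR) auto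
      ultimately have VR: "V = ?R" by blast
      have part1: "\<forall>s \<ge> T + 1. iter A b x0 (\<lambda>l. ws l \<omega>) (T + 1) = iter A b x0 (\<lambda>l. ws l \<omega>) s"
      proof (intro allI impI)
        fix s assume "s \<ge> T + 1"
        then show "iter A b x0 (\<lambda>l. ws l \<omega>) (T + 1) = iter A b x0 (\<lambda>l. ws l \<omega>) s"
          using iter_stable[of "T+1" s A "\<lambda>l. ws l \<omega>" b x0] elim VR unfolding V_def by auto
      qed
      have part2: "fst (iter A b x0 (\<lambda>l. ws l \<omega>) (T + 1))
                 = orth_proj (nullsp M A w) x0 + orth_proj ?R xs" if sol: "A *v xs = b" for xs
      proof -
        define S where "S = snd (iter A b x0 (\<lambda>l. ws l \<omega>) (T + 1))"
        have P: "projP S ?R" using iter_S[of A b x0 "\<lambda>l. ws l \<omega>" "T+1"] VR unfolding S_def V_def by simp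
        have P': "projP S (orth_comp (span {z. measure M {\<omega> \<in> space M. z \<bullet> (transpose A *v w \<omega>) = 0} = 1}))"
          using P unfolding rowsp_def nullsp_def .
        have "fst (iter A b x0 (\<lambda>l. ws l \<omega>) (T + 1)) = xs + S *v (x0 - xs)"
          using iter_x[OF sol] unfolding S_def .
        also have "\<dots> = S *v x0 + (xs - S *v xs)" by (simp add: matrix_vector_mult_diff_distrib)
        also have "\<dots> = orth_proj (nullsp M A w) x0 + orth_proj ?R xs"
          unfolding rowsp_def nullsp_def proj_eq[OF P'] ..
        finally show ?thesis .
      qed
      show "(\<forall>s \<ge> stopT M A w ws \<omega> + 1.
               iter A b x0 (\<lambda>l. ws l \<omega>) (stopT M A w ws \<omega> + 1) = iter A b x0 (\<lambda>l. ws l \<omega>) s) \<and>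
            (\<forall>xs. A *v xs = b \<longrightarrow>
               fst (iter A b x0 (\<lambda>l. ws l \<omega>) (stopT M A w ws \<omega> + 1))
                 = orth_proj (nullsp M A w) x0 + orth_proj (rowsp M A w) xs)"
        using part1 part2 unfolding T_def by blast
    qed
  qed
qed

end
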